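(* Let $(x_j)_{j=1}^N$ and $(f_j)_{j=1}^N$ be frames for $\ell_2^M$ with $\|x_j\|=\|f_j\|$ for all $1\leq j\leq N$. Let $A>0$ be a lower frame bound for either $(x_j)_{j=1}^N$ or $(f_j)_{j=1}^N$. Then for all non-zero scalars $(d_j)_{j=1}^N$, if $B$ is a Bessel bound for both $(d_jx_j)_{j=1}^N$ and $(d_j^{-1}f_j)_{j=1}^N$, then $B\geq A$. In particular, if $(x_j)_{j=1}^N$ and $(f_j)_{j=1}^N$ are both tight frames, then they are both tight with the same frame bound $A>0$, and $$A=\min_{d=(d_j)_{j=1}^N}\max\{B_{dX},B_{d^{-1}F}\},$$ where the minimum is over sequences of non-zero scalars, $B_{dX}$ is the optimal Bessel bound of $(d_jx_j)_{j=1}^N$ and $B_{d^{-1}F}$ is the optimal Bessel bound of $(d_j^{-1}f_j)_{j=1}^N$.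
   Context: A sequence $(y_j)_{j=1}^N$ in $\ell_2^M$ has Bessel bound $B$ if $\sum_j|\langle x,y_j\rangle|^2\leq B\|x\|^2$ for all $x$ (the optimal Bessel bound is the least such $B$); it is a frame with lower frame bound $A>0$ if moreover $A\|x\|^2\leq\sum_j|\langle x,y_j\rangle|^2$ for all $x$; it is tight with frame bound $A$ if $\sum_j|\langle x,y_j\rangle|^2=A\|x\|^2$ for all $x$. *)

theory Defs
  imports Complex_Main
begin

text \<open>Vectors of the finite-dimensional Hilbert space l_2^M are modelled as functions
  from a finite index type 'm (with CARD('m) = M) to the complex numbers;
  finite sequences (y_j)_{j=1}^N are functions from a finite index type 'n
  (with CARD('n) = N) to such vectors.\<close>

definition l2_inner :: "('m::finite \<Rightarrow> complex) \<Rightarrow> ('m \<Rightarrow> complex) \<Rightarrow> complex" where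
  "l2_inner x y = (\<Sum>i\<in>UNIV. x i * cnj (y i))"

definition l2_norm :: "('m::finite \<Rightarrow> complex) \<Rightarrow> real" where
  "l2_norm x = sqrt (\<Sum>i\<in>UNIV. (cmod (x i))\<^sup>2)"

definition frame_sum :: "('n::finite \<Rightarrow> ('m::finite \<Rightarrow> complex)) \<Rightarrow> ('m \<Rightarrow> complex) \<Rightarrow> real" where
  "frame_sum y x = (\<Sum>j\<in>UNIV. (cmod (l2_inner x (y j)))\<^sup>2)"

definition bessel_bound :: "('n::finite \<Rightarrow> ('m::finite \<Rightarrow> complex)) \<Rightarrow> real \<Rightarrow> bool" where
  "bessel_bound y B \<longleftrightarrow> (\<forall>x. frame_sum y x \<le> B * (l2_norm x)\<^sup>2)"

definition optimal_bessel_bound :: "('n::finite \<Rightarrow> ('m::finite \<Rightarrow> complex)) \<Rightarrow> real" where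
  "optimal_bessel_bound y = (LEAST B. bessel_bound y B)"

definition lower_frame_bound :: "('n::finite \<Rightarrow> ('m::finite \<Rightarrow> complex)) \<Rightarrow> real \<Rightarrow> bool" where
  "lower_frame_bound y A \<longleftrightarrow> A > 0 \<and> (\<forall>x. A * (l2_norm x)\<^sup>2 \<le> frame_sum y x)"

definition is_frame :: "('n::finite \<Rightarrow> ('m::finite \<Rightarrow> complex)) \<Rightarrow> bool" where
  "is_frame y \<longleftrightarrow> (\<exists>B. bessel_bound y B) \<and> (\<exists>A. lower_frame_bound y A)"

definition tight_frame :: "('n::finite \<Rightarrow> ('m::finite \<Rightarrow> complex)) \<Rightarrow> real \<Rightarrow> bool" where
  "tight_frame y A \<longleftrightarrow> is_frame y \<and> (\<forall>x. frame_sum y x = A * (l2_norm x)\<^sup>2)"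

definition scale_seq :: "('n \<Rightarrow> complex) \<Rightarrow> ('n \<Rightarrow> ('m \<Rightarrow> complex)) \<Rightarrow> ('n \<Rightarrow> ('m \<Rightarrow> complex))" where
  "scale_seq d y = (\<lambda>j i. d j * y j i)"

end

theory Submission
  imports Defs "HOL-Analysis.Convex"
begin

definition ev :: "'m::finite \<Rightarrow> ('m \<Rightarrow> complex)" where
  "ev i = (\<lambda>k. if k = i then 1 else 0)"

lemma l2_norm_sq: "(l2_norm x)\<^sup>2 = (\<Sum>i\<in>UNIV. (cmod (x i))\<^sup>2)"
  by (simp add: l2_norm_def sum_nonneg)

lemma if_mult1: "(if b then 1 else 0) * (z::complex) = (if b then z else 0)" by simp
lemma cmod_if1: "(cmod (if b then 1 else 0))\<^sup>2 = (if b then 1 else 0)" by simp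

lemma inner_ev: "l2_inner (ev i) v = cnj (v i)"
  by (simp add: l2_inner_def ev_def if_mult1)

lemma norm_ev: "l2_norm (ev i) = 1"
  by (simp add: l2_norm_def ev_def cmod_if1)

lemma CS: "(cmod (l2_inner x y))\<^sup>2 \<le> (l2_norm x)\<^sup>2 * (l2_norm y)\<^sup>2"
proof -
  have "cmod (l2_inner x y) \<le> (\<Sum>i\<in>UNIV. cmod (x i) * cmod (y i))"
    unfolding l2_inner_def
    by (rule order_trans[OF norm_sum]) (simp add: norm_mult)
  hence "(cmod (l2_inner x y))\<^sup>2 \<le> (\<Sum>i\<in>UNIV. cmod (x i) * cmod (y i))\<^sup>2"
    by (simp add: power_mono)
  also have "\<dots> \<le> (\<Sum>i\<in>UNIV. (cmod (x i))\<^sup>2) * (\<Sum>i\<in>UNIV. (cmod (y i))\<^sup>2)"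
    by (rule Cauchy_Schwarz_ineq_sum)
  finally show ?thesis by (simp add: l2_norm_sq)
qed

lemma fs_nonneg: "0 \<le> frame_sum y x"
  by (simp add: frame_sum_def sum_nonneg)

lemma bessel_exists: "bessel_bound y (\<Sum>j\<in>UNIV. (l2_norm (y j))\<^sup>2)"
  unfolding bessel_bound_def
proof
  fix x
  have "frame_sum y x \<le> (\<Sum>j\<in>UNIV. (l2_norm x)\<^sup>2 * (l2_norm (y j))\<^sup>2)"
    unfolding frame_sum_def by (rule sum_mono) (rule CS)
  thus "frame_sum y x \<le> (\<Sum>j\<in>UNIV. (l2_norm (y j))\<^sup>2) * (l2_norm x)\<^sup>2"
    by (simp add: sum_distrib_left sum_distrib_right mult.commute)
qed

lemma fs_zero: "l2_norm x = 0 \<Longrightarrow> frame_sum y x = 0"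
proof -
  assume "l2_norm x = 0"
  hence "\<And>j. (cmod (l2_inner x (y j)))\<^sup>2 \<le> 0" using CS[of x] by (metis mult_zero_left power_zero_numeral)
  hence "\<And>j. (cmod (l2_inner x (y j)))\<^sup>2 = 0" by (meson antisym zero_le_power2)
  thus ?thesis by (simp add: frame_sum_def)
qed

lemma bessel_nonneg:
  fixes y :: "'n::finite \<Rightarrow> ('m::finite \<Rightarrow> complex)"
  assumes "bessel_bound y B"
  shows "0 \<le> B"
proof -
  from assms have "frame_sum y (ev (undefined::'m)) \<le> B * (l2_norm (ev (undefined::'m)))\<^sup>2" unfolding bessel_bound_def by blast
  thus ?thesis using fs_nonneg[of y "ev (undefined::'m)"] by (simp add: norm_ev)
qed

lemma bessel_iff:
  "bessel_bound y B \<longleftrightarrow> (\<forall>r\<in>{frame_sum y x / (l2_norm x)\<^sup>2 | x. True}. r \<le> B)"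
proof
  assume b: "bessel_bound y B"
  show "\<forall>r\<in>{frame_sum y x / (l2_norm x)\<^sup>2 | x. True}. r \<le> B"
  proof
    fix r assume "r \<in> {frame_sum y x / (l2_norm x)\<^sup>2 | x. True}"
    then obtain x where r: "r = frame_sum y x / (l2_norm x)\<^sup>2" by blast
    show "r \<le> B"
    proof (cases "l2_norm x = 0")
      case True thus ?thesis using r bessel_nonneg[OF b] by simp
    next
      case False
      hence "(l2_norm x)\<^sup>2 > 0" by simp
      thus ?thesis using r b by (simp add: bessel_bound_def pos_divide_le_eq)
    qed
  qed
next
  assume h: "\<forall>r\<in>{frame_sum y x / (l2_norm x)\<^sup>2 | x. True}. r \<le> B"
  show "bessel_bound y B" unfolding bessel_bound_def
  proof
    fix x
    show "frame_sum y x \<le> B * (l2_norm x)\<^sup>2"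
    proof (cases "l2_norm x = 0")
      case True thus ?thesis using fs_zero[of x y] by simp
    next
      case False
      hence p: "(l2_norm x)\<^sup>2 > 0" by simp
      have "frame_sum y x / (l2_norm x)\<^sup>2 \<le> B" using h by blast
      thus ?thesis using p by (simp add: pos_divide_le_eq)
    qed
  qed
qed

lemma obb_ok: "bessel_bound y (optimal_bessel_bound y)"
proof -
  define R where "R = {frame_sum y x / (l2_norm x)\<^sup>2 | x. True}"
  have bi: "\<And>B. bessel_bound y B \<longleftrightarrow> (\<forall>r\<in>R. r \<le> B)" unfolding R_def by (rule bessel_iff)
  have ne: "R \<noteq> {}" unfolding R_def by blast
  have bd: "bdd_above R" using bi bessel_exists[of y] unfolding bdd_above_def by blast
  have "optimal_bessel_bound y = Sup R"
    unfolding optimal_bessel_bound_def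
  proof (rule Least_equality)
    show "bessel_bound y (Sup R)" using bi cSup_upper[OF _ bd] by blast
    show "\<And>B. bessel_bound y B \<Longrightarrow> Sup R \<le> B" using bi cSup_least[OF ne] by blast
  qed
  thus ?thesis using bi cSup_upper[OF _ bd] by simp
qed

lemma bessel_mono: "bessel_bound y B \<Longrightarrow> B \<le> B' \<Longrightarrow> bessel_bound y B'"
  unfolding bessel_bound_def by (meson mult_right_mono order_trans zero_le_power2)

lemma trace: "(\<Sum>i\<in>UNIV. frame_sum y (ev i)) = (\<Sum>j\<in>UNIV. (l2_norm (y j))\<^sup>2)"
  unfolding frame_sum_def inner_ev l2_norm_sq complex_mod_cnj by (rule sum.swap)

lemma bessel_trace:
  fixes y :: "'n::finite \<Rightarrow> ('m::finite \<Rightarrow> complex)"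
  assumes "bessel_bound y B"
  shows "(\<Sum>j\<in>UNIV. (l2_norm (y j))\<^sup>2) \<le> B * real (card (UNIV::'m set))"
proof -
  note b = assms
  have "(\<Sum>i\<in>(UNIV::'m set). frame_sum y (ev i)) \<le> (\<Sum>i\<in>(UNIV::'m set). B)"
    proof (rule sum_mono)
    fix i :: 'm
    have "frame_sum y (ev i) \<le> B * (l2_norm (ev i))\<^sup>2" using b unfolding bessel_bound_def by blast
    thus "frame_sum y (ev i) \<le> B" by (simp add: norm_ev)
  qed
  thus ?thesis by (simp add: trace mult.commute)
qed

lemma lower_trace:
  fixes y :: "'n::finite \<Rightarrow> ('m::finite \<Rightarrow> complex)"
  assumes "lower_frame_bound y A"
  shows "A * real (card (UNIV::'m set)) \<le> (\<Sum>j\<in>UNIV. (l2_norm (y j))\<^sup>2)"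
proof -
  note b = assms
  have "(\<Sum>i\<in>(UNIV::'m set). A) \<le> (\<Sum>i\<in>(UNIV::'m set). frame_sum y (ev i))"
    proof (rule sum_mono)
    fix i :: 'm
    have "A * (l2_norm (ev i))\<^sup>2 \<le> frame_sum y (ev i)" using b unfolding lower_frame_bound_def by blast
    thus "A \<le> frame_sum y (ev i)" by (simp add: norm_ev)
  qed
  thus ?thesis by (simp add: trace mult.commute)
qed

lemma tight_trace:
  fixes y :: "'n::finite \<Rightarrow> ('m::finite \<Rightarrow> complex)"
  assumes "tight_frame y A"
  shows "A * real (card (UNIV::'m set)) = (\<Sum>j\<in>UNIV. (l2_norm (y j))\<^sup>2)"
proof -
  note b = assms
  have "(\<Sum>i\<in>(UNIV::'m set). A) = (\<Sum>i\<in>(UNIV::'m set). frame_sum y (ev i))"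
    by (rule sum.cong) (use b in \<open>simp_all add: tight_frame_def norm_ev\<close>)
  thus ?thesis by (simp add: trace mult.commute)
qed

lemma scaled_norm: "(l2_norm (scale_seq d y j))\<^sup>2 = (cmod (d j))\<^sup>2 * (l2_norm (y j))\<^sup>2"
  unfolding l2_norm_sq scale_seq_def by (simp add: norm_mult power_mult_distrib sum_distrib_left)

lemma two_le: "0 \<le> (a::real) \<Longrightarrow> 0 < t \<Longrightarrow> 2 * a \<le> t * a + a / t"
proof -
  assume a: "0 \<le> a" and t: "0 < t"
  have "2 * t \<le> t * t + 1" using sum_squares_ge_zero[of "t - 1" 0]
    by (simp add: algebra_simps power2_eq_square)
  hence "2 \<le> t + 1 / t" using t by (simp add: field_simps)
  hence "2 * a \<le> (t + 1/t) * a" using a by (simp add: mult_right_mono)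
  thus ?thesis by (simp add: algebra_simps)
qed

lemma part1:
  fixes x f :: "'n::finite \<Rightarrow> ('m::finite \<Rightarrow> complex)"
  assumes eq: "\<forall>j. l2_norm (x j) = l2_norm (f j)"
    and A: "lower_frame_bound x A \<or> lower_frame_bound f A"
    and d: "\<forall>j. d j \<noteq> 0"
    and B1: "bessel_bound (scale_seq d x) B"
    and B2: "bessel_bound (scale_seq (\<lambda>j. inverse (d j)) f) B"
  shows "A \<le> B"
proof -
  define c where "c = real (card (UNIV::'m set))"
  have c: "c > 0" unfolding c_def by (simp add: card_gt_0_iff)
  define a where "a j = (l2_norm (x j))\<^sup>2" for j
  define t where "t j = (cmod (d j))\<^sup>2" for j
  have tp: "t j > 0" for j using d by (simp add: t_def)
  have s1: "(\<Sum>j\<in>UNIV. t j * a j) \<le> B * c"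
    using bessel_trace[OF B1] by (simp add: scaled_norm a_def t_def c_def)
  have s2: "(\<Sum>j\<in>UNIV. a j / t j) \<le> B * c"
    using bessel_trace[OF B2] eq by (simp add: scaled_norm a_def t_def c_def norm_inverse power_inverse divide_inverse mult.commute)
  have s3: "A * c \<le> (\<Sum>j\<in>UNIV. a j)"
    using A lower_trace[of x A] lower_trace[of f A] eq by (auto simp: a_def c_def)
  have "2 * (\<Sum>j\<in>UNIV. a j) \<le> (\<Sum>j\<in>UNIV. t j * a j) + (\<Sum>j\<in>UNIV. a j / t j)"
    unfolding sum_distrib_left sum.distrib[symmetric]
    by (rule sum_mono) (rule two_le, simp add: a_def, rule tp)
  hence "A * c \<le> B * c" using s1 s2 s3 by linarith
  thus ?thesis using c by simp
qed

lemma tight_obb: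
  fixes y :: "'n::finite \<Rightarrow> ('m::finite \<Rightarrow> complex)"
  assumes "tight_frame y A"
  shows "optimal_bessel_bound y = A"
  unfolding optimal_bessel_bound_def
proof (rule Least_equality)
  note t = assms
  show "bessel_bound y A" using t by (simp add: tight_frame_def bessel_bound_def)
  fix B assume "bessel_bound y B"
  hence "frame_sum y (ev (undefined::'m)) \<le> B * (l2_norm (ev (undefined::'m)))\<^sup>2" unfolding bessel_bound_def by blast
  hence "frame_sum y (ev (undefined::'m)) \<le> B" by (simp add: norm_ev)
  moreover have "frame_sum y (ev (undefined::'m)) = A" using t by (simp add: tight_frame_def norm_ev)
  ultimately show "A \<le> B" by simp
qed

lemma tight_pos:
  fixes y :: "'n::finite \<Rightarrow> ('m::finite \<Rightarrow> complex)"
  assumes "tight_frame y A"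
  shows "A > 0"
proof -
  note t = assms
  then obtain A0 where "lower_frame_bound y A0" by (auto simp: tight_frame_def is_frame_def)
  hence "A0 > 0" "A0 * (l2_norm (ev (undefined::'m)))\<^sup>2 \<le> frame_sum y (ev (undefined::'m))" unfolding lower_frame_bound_def by blast+
  hence "A0 > 0" "A0 \<le> frame_sum y (ev (undefined::'m))" by (simp_all add: norm_ev)
  moreover have "frame_sum y (ev (undefined::'m)) = A" using t by (simp add: tight_frame_def norm_ev)
  ultimately show ?thesis by simp
qed

lemma scale_one: "scale_seq (\<lambda>j. 1) y = y"
  by (simp add: scale_seq_def)

theorem proposition4p2:
  fixes x f :: "'n::finite \<Rightarrow> ('m::finite \<Rightarrow> complex)"
  assumes "is_frame x" and "is_frame f"
    and "\<forall>j. l2_norm (x j) = l2_norm (f j)"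
  shows "(\<forall>A. (lower_frame_bound x A \<or> lower_frame_bound f A) \<longrightarrow>
            (\<forall>d :: 'n \<Rightarrow> complex. (\<forall>j. d j \<noteq> 0) \<longrightarrow>
              (\<forall>B. bessel_bound (scale_seq d x) B \<and>
                   bessel_bound (scale_seq (\<lambda>j. inverse (d j)) f) B \<longrightarrow> B \<ge> A)))
       \<and> ((\<exists>A1. tight_frame x A1) \<and> (\<exists>A2. tight_frame f A2) \<longrightarrow>
            (\<exists>A>0. tight_frame x A \<and> tight_frame f A \<and>
               (\<exists>d :: 'n \<Rightarrow> complex. (\<forall>j. d j \<noteq> 0) \<and>
                  max (optimal_bessel_bound (scale_seq d x))
                      (optimal_bessel_bound (scale_seq (\<lambda>j. inverse (d j)) f)) = A) \<and>
               (\<forall>d :: 'n \<Rightarrow> complex. (\<forall>j. d j \<noteq> 0) \<longrightarrow>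
                  A \<le> max (optimal_bessel_bound (scale_seq d x))
                      (optimal_bessel_bound (scale_seq (\<lambda>j. inverse (d j)) f)))))"
proof (intro conjI impI allI)
  fix A d B
  assume "lower_frame_bound x A \<or> lower_frame_bound f A" "\<forall>j. d j \<noteq> 0"
    "bessel_bound (scale_seq d x) B \<and> bessel_bound (scale_seq (\<lambda>j. inverse (d j)) f) B"
  thus "A \<le> B" using part1 assms(3) by blast
next
  assume "(\<exists>A1. tight_frame x A1) \<and> (\<exists>A2. tight_frame f A2)"
  then obtain A1 A2 where t1: "tight_frame x A1" and t2: "tight_frame f A2" by blast
  have "A1 * real (card (UNIV::'m set)) = A2 * real (card (UNIV::'m set))"
    using tight_trace[OF t1] tight_trace[OF t2] assms(3) by simp
  hence e: "A1 = A2" by simp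
  have p: "A1 > 0" by (rule tight_pos[OF t1])
  have lf: "lower_frame_bound x A1" using t1 p by (simp add: tight_frame_def lower_frame_bound_def)
  show "\<exists>A>0. tight_frame x A \<and> tight_frame f A \<and>
               (\<exists>d :: 'n \<Rightarrow> complex. (\<forall>j. d j \<noteq> 0) \<and>
                  max (optimal_bessel_bound (scale_seq d x))
                      (optimal_bessel_bound (scale_seq (\<lambda>j. inverse (d j)) f)) = A) \<and>
               (\<forall>d :: 'n \<Rightarrow> complex. (\<forall>j. d j \<noteq> 0) \<longrightarrow>
                  A \<le> max (optimal_bessel_bound (scale_seq d x))
                      (optimal_bessel_bound (scale_seq (\<lambda>j. inverse (d j)) f)))"
  proof (intro exI[of _ A1] conjI allI impI)
    show "A1 > 0" by (rule p)
    show "tight_frame x A1" by (rule t1)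
    show "tight_frame f A1" using t2 e by simp
    show "\<exists>d :: 'n \<Rightarrow> complex. (\<forall>j. d j \<noteq> 0) \<and>
                  max (optimal_bessel_bound (scale_seq d x))
                      (optimal_bessel_bound (scale_seq (\<lambda>j. inverse (d j)) f)) = A1"
      by (rule exI[of _ "\<lambda>j. 1"]) (simp add: scale_one tight_obb[OF t1] tight_obb[OF t2] e)
  next
    fix d :: "'n \<Rightarrow> complex"
    assume d: "\<forall>j. d j \<noteq> 0"
    let ?B = "max (optimal_bessel_bound (scale_seq d x))
                      (optimal_bessel_bound (scale_seq (\<lambda>j. inverse (d j)) f))"
    have "bessel_bound (scale_seq d x) ?B" by (rule bessel_mono[OF obb_ok]) simp
    moreover have "bessel_bound (scale_seq (\<lambda>j. inverse (d j)) f) ?B" by (rule bessel_mono[OF obb_ok]) simp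
    ultimately show "A1 \<le> ?B" using part1[OF assms(3) _ d] lf by blast
  qed
qed

end
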